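(* Let $q=4$. Let $\mathcal N_1,\dots,\mathcal N_5$ be the sets of $\Gamma$-planes, $2_{\mathscr C}$-planes, $3_{\mathscr C}$-planes, $\overline{1_{\mathscr C}}$-planes and $0_{\mathscr C}$-planes, and $\mathcal M_1,\dots,\mathcal M_5$ the sets of $\mathscr C$-points, T-points, $3_\Gamma$-points, $1_\Gamma$-points and $0_\Gamma$-points (these are the $G_4$-orbits). For each pair $(i,j)$ every plane of $\mathcal N_i$ contains exactly $t_{ij}$ points of $\mathcal M_j$ and every point of $\mathcal M_j$ lies on exactly $b_{ij}$ planes of $\mathcal N_i$, where, listing $(t_{ij},b_{ij})$ for $j=1,\dots,5$: $\mathcal N_1$: $(1,1),(8,2),(6,3),(6,1),(0,0)$; $\mathcal N_2$: $(2,8),(7,7),(1,2),(6,4),(5,5)$; $\mathcal N_3$: $(3,6),(2,1),(4,4),(6,2),(6,3)$; $\mathcal N_4$: $(1,6),(4,6),(2,6),(10,10),(4,6)$; $\mathcal N_5$: $(0,0),(5,5),(3,6),(6,4),(7,7)$.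
   Context: Notation. $\mathbb F_q$ is the field with $q$ elements, $\mathbb F_q^+=\mathbb F_q\cup\{\infty\}$. Points of $\mathrm{PG}(3,q)$ are written $\mathbf P(x_0,x_1,x_2,x_3)$ with $x$ a nonzero row vector up to scalars; $\boldsymbol\pi(c_0,c_1,c_2,c_3)$ is the plane $c_0x_0+c_1x_1+c_2x_2+c_3x_3=0$. Put $P(t)=\mathbf P(t^3,t^2,t,1)$ for $t\in\mathbb F_q$, $P(\infty)=\mathbf P(1,0,0,0)$, and $\mathscr C=\{P(t):t\in\mathbb F_q^+\}$ (the twisted cubic). The osculating planes are $\pi_{\rm osc}(t)=\boldsymbol\pi(1,-3t,3t^2,-t^3)$ ($t\in\mathbb F_q$) and $\pi_{\rm osc}(\infty)=\boldsymbol\pi(0,0,0,1)$; these $q+1$ planes are called $\Gamma$-planes. The tangent at $P(t)$, $t\in\mathbb F_q$, is the line through $P(t)$ and $\mathbf P(3t^2,2t,1,0)$; the tangent at $P(\infty)$ is the line through $\mathbf P(1,0,0,0)$ and $\mathbf P(0,1,0,0)$. $G_q$ is the group of all projectivities of $\mathrm{PG}(3,q)$ mapping $\mathscr C$ onto itself. Plane types: $\Gamma$-plane = osculating plane; $\overline{1_{\mathscr C}}$-plane = non-osculating plane meeting $\mathscr C$ in exactly one point; $d_{\mathscr C}$-plane ($d\in\{0,2,3\}$) = plane meeting $\mathscr C$ in exactly $d$ points. Point types (for $q\not\equiv0\pmod 3$): $\mathscr C$-point = point of $\mathscr C$; T-point = point off $\mathscr C$ on some tangent; for $\mu\in\{0,1,3\}$,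 $\mu_\Gamma$-point = point off $\mathscr C$, on no tangent, lying on exactly $\mu$ $\Gamma$-planes. *)

theory Defs
  imports "HOL-Analysis.Finite_Cartesian_Product"
begin

definition vec4 :: "'a \<Rightarrow> 'a \<Rightarrow> 'a \<Rightarrow> 'a \<Rightarrow> 'a^4" where
  "vec4 a b c d = (\<chi> i. if i = 0 then a else if i = 1 then b else if i = 2 then c else d)"

definition smul4 :: "'a::field \<Rightarrow> 'a^4 \<Rightarrow> 'a^4" where
  "smul4 c x = (\<chi> i. c * x $ i)"

definition dot4 :: "'a::field^4 \<Rightarrow> 'a^4 \<Rightarrow> 'a" where
  "dot4 c x = (\<Sum>i\<in>UNIV. c $ i * x $ i)"

definition pt :: "'a::field^4 \<Rightarrow> ('a^4) set" where
  "pt x = {smul4 c x | c. c \<noteq> 0}"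

definition PG_points :: "('a::field^4) set set" where
  "PG_points = {pt x | x. x \<noteq> 0}"

definition plane :: "'a::field^4 \<Rightarrow> ('a^4) set set" where
  "plane c = {P \<in> PG_points. \<forall>x\<in>P. dot4 c x = 0}"

definition PG_planes :: "('a::field^4) set set set" where
  "PG_planes = {plane c | c. c \<noteq> 0}"

definition line_through :: "'a::field^4 \<Rightarrow> 'a^4 \<Rightarrow> ('a^4) set set" where
  "line_through x y = {pt (smul4 a x + smul4 b y) | a b. a \<noteq> 0 \<or> b \<noteq> 0}"

text \<open>Twisted cubic; None stands for the parameter infinity.\<close>
definition cubic_pt :: "'a::field option \<Rightarrow> ('a^4) set" where
  "cubic_pt t = (case t of None \<Rightarrow> pt (vec4 1 0 0 0)
                 | Some s \<Rightarrow> pt (vec4 (s^3) (s^2) s 1))"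

definition twisted_cubic :: "('a::field^4) set set" where
  "twisted_cubic = range cubic_pt"

definition osc_plane :: "'a::field option \<Rightarrow> ('a^4) set set" where
  "osc_plane t = (case t of None \<Rightarrow> plane (vec4 0 0 0 1)
                  | Some s \<Rightarrow> plane (vec4 1 (-3 * s) (3 * s^2) (-(s^3))))"

definition Gamma_planes :: "('a::field^4) set set set" where
  "Gamma_planes = range osc_plane"

definition tangent :: "'a::field option \<Rightarrow> ('a^4) set set" where
  "tangent t = (case t of None \<Rightarrow> line_through (vec4 1 0 0 0) (vec4 0 1 0 0)
                | Some s \<Rightarrow> line_through (vec4 (s^3) (s^2) s 1) (vec4 (3 * s^2) (2 * s) 1 0))"

definition onebar_planes :: "('a::field^4) set set set" where
  "onebar_planes = {\<pi> \<in> PG_planes. \<pi> \<notin> Gamma_planes \<and> card (\<pi> \<inter> twisted_cubic) = 1}"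

definition dC_planes :: "nat \<Rightarrow> ('a::field^4) set set set" where
  "dC_planes d = {\<pi> \<in> PG_planes. card (\<pi> \<inter> twisted_cubic) = d}"

definition T_points :: "('a::field^4) set set" where
  "T_points = {P \<in> PG_points. P \<notin> twisted_cubic \<and> (\<exists>t. P \<in> tangent t)}"

definition muGamma_points :: "nat \<Rightarrow> ('a::field^4) set set" where
  "muGamma_points \<mu> = {P \<in> PG_points. P \<notin> twisted_cubic \<and> (\<forall>t. P \<notin> tangent t)
                          \<and> card {\<pi> \<in> Gamma_planes. P \<in> \<pi>} = \<mu>}"

text \<open>The orbit lists N_1..N_5 and M_1..M_5 (0-indexed).\<close>
definition plane_classes :: "('a::field^4) set set set list" where
  "plane_classes = [Gamma_planes, dC_planes 2, dC_planes 3, onebar_planes, dC_planes 0]"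

definition point_classes :: "('a::field^4) set set list" where
  "point_classes = [twisted_cubic, T_points, muGamma_points 3, muGamma_points 1, muGamma_points 0]"

end

theory Submission
  imports Defs "HOL-Number_Theory.Residues"
begin


lemma exhaust4':
  fixes x :: 4
  shows "x = 1 \<or> x = 2 \<or> x = 3 \<or> x = 4"
proof (induct x)
  case (of_int z)
  then have "z = 0 \<or> z = 1 \<or> z = 2 \<or> z = 3" by fastforce
  then show ?case by auto
qed

lemma four0: "(4::4) = 0" by simp

lemma exhaust4: fixes x :: 4 shows "x = 0 \<or> x = 1 \<or> x = 2 \<or> x = 3"
  using exhaust4'[of x] unfolding four0 by blast

lemma UNIV4: "(UNIV :: 4 set) = {0,1,2,3}"
proof (rule Set.set_eqI)
  fix x :: 4 show "x \<in> UNIV \<longleftrightarrow> x \<in> {0,1,2,3}" using exhaust4[of x] by blast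
qed

lemma vec4_nth [simp]: "vec4 a b c d $ 0 = a" "vec4 a b c d $ 1 = b" "vec4 a b c d $ 2 = c" "vec4 a b c d $ 3 = d"
  by (simp_all add: vec4_def)

lemma dot4_vec4 [simp]: "dot4 (vec4 a b c d) (vec4 x y z t) = a*x + b*y + c*z + (d::'a::field)*t"
  unfolding dot4_def UNIV4 by (simp add: algebra_simps)

lemma vec4_all: "x = vec4 (x$0) (x$1) (x$2) (x$3)"
  unfolding vec_eq_iff
proof
  fix i :: 4
  show "x $ i = vec4 (x$0) (x$1) (x$2) (x$3) $ i" using exhaust4[of i] by (elim disjE) simp_all
qed

lemma vec4_eq_iff: "vec4 a b c d = vec4 a' b' c' d' \<longleftrightarrow> a = a' \<and> b = b' \<and> c = c' \<and> d = d'"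
proof
  assume h: "vec4 a b c d = vec4 a' b' c' d'"
  have "a = a'" using arg_cong[OF h, of "\<lambda>v. v $ 0"] by simp
  moreover have "b = b'" using arg_cong[OF h, of "\<lambda>v. v $ 1"] by simp
  moreover have "c = c'" using arg_cong[OF h, of "\<lambda>v. v $ 2"] by simp
  moreover have "d = d'" using arg_cong[OF h, of "\<lambda>v. v $ 3"] by simp
  ultimately show "a = a' \<and> b = b' \<and> c = c' \<and> d = d'" by blast
qed simp

lemma smul4_vec4 [simp]: "smul4 k (vec4 a b c d) = vec4 (k*a) (k*b) (k*c) (k*d)"
  unfolding smul4_def vec4_def by (simp add: vec_eq_iff)

lemma add_vec4 [simp]: "vec4 a b c d + vec4 a' b' c' d' = vec4 (a+a') (b+b') (c+c') (d+d')"
  unfolding vec4_def by (simp add: vec_eq_iff)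

lemma zero_vec4: "(0::'a::zero^4) = vec4 0 0 0 0"
  unfolding vec4_def by (simp add: vec_eq_iff)




definition ww :: "'a::field" where "ww = (SOME w. w \<noteq> 0 \<and> w \<noteq> 1)"

context
  fixes F :: "'a::{field,finite} itself"
  assumes card4: "CARD('a) = 4"
begin

lemma univ4: "distinct [a,b,c,d::'a] \<Longrightarrow> UNIV = {a,b,c,d}"
proof -
  assume "distinct [a,b,c,d::'a]"
  then have "card (set [a,b,c,d]) = 4" by (simp only: distinct_card) simp
  then have "card {a,b,c,d} = card (UNIV::'a set)" using card4 by simp
  then show ?thesis by (intro card_subset_eq[symmetric]) simp_all
qed

lemma other: "length xs < 4 \<Longrightarrow> \<exists>v::'a. v \<notin> set xs"
proof (rule ccontr)
  assume "length xs < 4" "\<not> (\<exists>v::'a. v \<notin> set xs)"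
  then have "set xs = UNIV" by auto
  then have "card (UNIV::'a set) \<le> length xs" using card_length[of xs] by simp
  then show False using card4 \<open>length xs < 4\<close> by simp
qed

lemma char2: "(1::'a) + 1 = 0"
proof -
  have pos: "CHAR('a) > 0" by (rule finite_imp_CHAR_pos) simp
  have pr: "prime CHAR('a)" by (rule prime_CHAR_semidom[OF pos])
  have "CHAR('a) dvd 2 * 2" using CHAR_dvd_CARD[where 'a='a] card4 by simp
  then have "CHAR('a) dvd 2" using prime_dvd_mult_iff[OF pr, of 2 2] by blast
  then have "CHAR('a) = 2" using primes_dvd_imp_eq two_is_prime_nat pr by blast
  then have "of_nat 2 = (0::'a)" using of_nat_CHAR[where 'a='a] by simp
  then show ?thesis by simp
qed

lemma xx: "(x::'a) + x = 0"
proof -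
  have "x + x = (1 + 1) * x" by (simp only: distrib_right mult_1_left)
  then show ?thesis by (simp only: char2 mult_zero_left)
qed

lemma xxy: "(x::'a) + (x + y) = y"
  by (simp only: add.assoc[symmetric] xx add_0_left)

lemma neg_eq: "- (x::'a) = x"
proof -
  have "x = - x" using xx[of x] by (simp only: add_eq_0_iff)
  then show ?thesis by (rule sym)
qed

lemma two_eq: "(2::'a) = 0"
  using char2 by (simp only: one_add_one)

lemma three_eq: "(3::'a) = 1"
proof -
  have "(3::'a) = 2 + 1" by simp
  then show ?thesis by (simp only: two_eq add_0_left)
qed

declare xx [simp] xxy [simp] neg_eq [simp] two_eq [simp] three_eq [simp]

lemma ww_ne: "(ww::'a) \<noteq> 0" "(ww::'a) \<noteq> 1"
proof -
  obtain v::'a where "v \<notin> set [0,1]" using other[of "[0,1]"] by auto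
  then have "\<exists>w::'a. w \<noteq> 0 \<and> w \<noteq> 1" by auto
  then have "(ww::'a) \<noteq> 0 \<and> (ww::'a) \<noteq> 1" unfolding ww_def by (rule someI_ex)
  then show "(ww::'a) \<noteq> 0" "(ww::'a) \<noteq> 1" by auto
qed

lemma ww1_ne: "(ww::'a) + 1 \<noteq> 0" "(ww::'a) + 1 \<noteq> 1" "(ww::'a) + 1 \<noteq> ww"
  using ww_ne by (metis add_right_cancel xx, simp, simp)

lemma univ_ww: "(UNIV::'a set) = {0,1,ww,ww+1}"
  by (rule univ4) (use ww_ne ww1_ne in auto)

lemma ww_sq: "(ww::'a) * ww = ww + 1"
proof -
  have "ww * ww \<in> {0,1,ww,ww+(1::'a)}" using univ_ww by blast
  moreover have "ww * ww \<noteq> (0::'a)" using ww_ne by simp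
  moreover have "ww * ww \<noteq> (ww::'a)" using ww_ne by simp
  moreover have "ww * ww \<noteq> (1::'a)"
  proof
    assume h: "ww * ww = (1::'a)"
    have "(ww+1)*(ww+1) = ww*ww + (ww + ww) + (1::'a)" by (simp add: algebra_simps)
    also have "\<dots> = 0" using h by simp
    finally show False using ww1_ne by simp
  qed
  ultimately show ?thesis by blast
qed

end



datatype g4 = G0 | G1 | GW | GX
type_synonym cd = "g4 \<times> g4 \<times> g4 \<times> g4"

fun add4 :: "g4 \<Rightarrow> g4 \<Rightarrow> g4" where
  "add4 G0 y = y" | "add4 x G0 = x"
| "add4 G1 G1 = G0" | "add4 G1 GW = GX" | "add4 G1 GX = GW"
| "add4 GW G1 = GX" | "add4 GW GW = G0" | "add4 GW GX = G1"
| "add4 GX G1 = GW" | "add4 GX GW = G1" | "add4 GX GX = G0"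

fun mul4 :: "g4 \<Rightarrow> g4 \<Rightarrow> g4" where
  "mul4 G0 y = G0" | "mul4 x G0 = G0"
| "mul4 G1 y = y" | "mul4 x G1 = x"
| "mul4 GW GW = GX" | "mul4 GW GX = G1" | "mul4 GX GW = G1" | "mul4 GX GX = GW"

fun inv4 :: "g4 \<Rightarrow> g4" where
  "inv4 G0 = G0" | "inv4 G1 = G1" | "inv4 GW = GX" | "inv4 GX = GW"

fun dotc :: "cd \<Rightarrow> cd \<Rightarrow> g4" where
  "dotc (a,b,c,d) (x,y,z,t) = add4 (add4 (mul4 a x) (mul4 b y)) (add4 (mul4 c z) (mul4 d t))"

fun scalec :: "g4 \<Rightarrow> cd \<Rightarrow> cd" where
  "scalec k (a,b,c,d) = (mul4 k a, mul4 k b, mul4 k c, mul4 k d)"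

fun addc :: "cd \<Rightarrow> cd \<Rightarrow> cd" where
  "addc (a,b,c,d) (x,y,z,t) = (add4 a x, add4 b y, add4 c z, add4 d t)"

fun firstnz :: "cd \<Rightarrow> g4" where
  "firstnz (a,b,c,d) = (if a \<noteq> G0 then a else if b \<noteq> G0 then b else if c \<noteq> G0 then c else d)"

definition normc :: "cd \<Rightarrow> cd" where "normc c = scalec (inv4 (firstnz c)) c"

definition zc :: cd where "zc = (G0,G0,G0,G0)"

definition NP :: "cd set" where "NP = {c. firstnz c = G1}"

primrec e :: "g4 \<Rightarrow> 'a::field" where
  "e G0 = 0" | "e G1 = 1" | "e GW = ww" | "e GX = ww + 1"

fun V :: "cd \<Rightarrow> 'a::field^4" where
  "V (a,b,c,d) = vec4 (e a) (e b) (e c) (e d)"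

definition Pt :: "cd \<Rightarrow> ('a::field^4) set" where "Pt c = pt (V c)"
definition Pl :: "cd \<Rightarrow> ('a::field^4) set set" where "Pl c = plane (V c)"

lemma g4_UNIV: "(UNIV :: g4 set) = {G0,G1,GW,GX}"
  using g4.exhaust by auto

lemma mul4_eq0: "mul4 k a = G0 \<longleftrightarrow> k = G0 \<or> a = G0"
  by (cases k; cases a) simp_all

lemma mul4_1: "mul4 k G1 = k"
  by (cases k) simp_all

lemma mul4_inv: "k \<noteq> G0 \<Longrightarrow> mul4 (inv4 k) k = G1"
  by (cases k) simp_all

lemma inv4_ne: "k \<noteq> G0 \<Longrightarrow> inv4 k \<noteq> G0"
  by (cases k) simp_all

lemma mul4_1l: "mul4 G1 k = k"
  by (cases k) simp_all

lemma scalec_1: "scalec G1 c = c"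
  by (cases c) (simp add: mul4_1l)

lemma firstnz_scale: "k \<noteq> G0 \<Longrightarrow> firstnz (scalec k c) = mul4 k (firstnz c)"
  by (cases c) (simp add: mul4_eq0)

lemma firstnz_zero: "firstnz c = G0 \<longleftrightarrow> c = zc"
  by (cases c) (simp add: zc_def)

lemma normc_NP: "c \<noteq> zc \<Longrightarrow> normc c \<in> NP"
  unfolding normc_def NP_def using firstnz_zero[of c]
  by (simp add: firstnz_scale inv4_ne mul4_inv)

lemma NP_nz: "c \<in> NP \<Longrightarrow> c \<noteq> zc"
  unfolding NP_def using firstnz_zero[of c] by auto

lemma smul4_smul4: "smul4 a (smul4 b x) = smul4 (a * b) (x::'a::field^4)"
  unfolding smul4_def by (simp add: vec_eq_iff mult.assoc)

lemma smul4_one: "smul4 1 x = (x::'a::field^4)"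
  unfolding smul4_def by (simp add: vec_eq_iff)

lemma pt_smul: "(k::'a::field) \<noteq> 0 \<Longrightarrow> pt (smul4 k x) = pt x"
proof -
  assume k: "k \<noteq> 0"
  show ?thesis
  proof
    show "pt (smul4 k x) \<subseteq> pt x"
      unfolding pt_def using k by (auto simp: smul4_smul4)
    show "pt x \<subseteq> pt (smul4 k x)"
    proof
      fix y assume "y \<in> pt x"
      then obtain c where c: "c \<noteq> 0" "y = smul4 c x" unfolding pt_def by auto
      have "y = smul4 (c / k) (smul4 k x)" using c k by (simp add: smul4_smul4)
      moreover have "c / k \<noteq> 0" using c k by simp
      ultimately show "y \<in> pt (smul4 k x)" unfolding pt_def by blast
    qed
  qed
qed

lemma pt_self: "(x::'a::field^4) \<in> pt x"
  unfolding pt_def using smul4_one[of x] by (metis (mono_tags, lifting) mem_Collect_eq one_neq_zero)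

lemma pt_eq: "pt x = pt y \<Longrightarrow> \<exists>k. (k::'a::field) \<noteq> 0 \<and> y = smul4 k x"
proof -
  assume "pt x = pt y"
  then have "y \<in> pt x" using pt_self[of y] by simp
  then show ?thesis unfolding pt_def by auto
qed

lemma dot4_smul_right: "dot4 c (smul4 k x) = k * dot4 c (x::'a::field^4)"
  unfolding dot4_def smul4_def by (simp add: sum_distrib_left algebra_simps)

lemma dot4_smul_left: "dot4 (smul4 k c) x = k * dot4 c (x::'a::field^4)"
  unfolding dot4_def smul4_def by (simp add: sum_distrib_left algebra_simps)

lemma pt_in_PG: "(x::'a::field^4) \<noteq> 0 \<Longrightarrow> pt x \<in> PG_points"
  unfolding PG_points_def by auto

lemma in_plane: "(x::'a::field^4) \<noteq> 0 \<Longrightarrow> pt x \<in> plane c \<longleftrightarrow> dot4 c x = 0"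
proof -
  assume x: "x \<noteq> 0"
  have "(\<forall>y\<in>pt x. dot4 c y = 0) \<longleftrightarrow> dot4 c x = 0"
  proof
    assume "\<forall>y\<in>pt x. dot4 c y = 0" then show "dot4 c x = 0" using pt_self[of x] by blast
  next
    assume "dot4 c x = 0" then show "\<forall>y\<in>pt x. dot4 c y = 0"
      unfolding pt_def by (auto simp: dot4_smul_right)
  qed
  then show ?thesis unfolding plane_def using pt_in_PG[OF x] by simp
qed

lemma plane_smul: "(k::'a::field) \<noteq> 0 \<Longrightarrow> plane (smul4 k c) = plane c"
  unfolding plane_def by (simp add: dot4_smul_left)

context
  fixes F :: "'a::{field,finite} itself"
  assumes card4: "CARD('a) = 4"
begin

lemma ww_facts: "(ww::'a) \<noteq> 0" "(ww::'a) \<noteq> 1" "(ww::'a) + 1 \<noteq> 0" "(ww::'a) + 1 \<noteq> 1" "(ww::'a) + 1 \<noteq> ww"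
  "(0::'a) \<noteq> ww" "(1::'a) \<noteq> ww" "(0::'a) \<noteq> ww + 1" "(1::'a) \<noteq> ww + 1" "(ww::'a) \<noteq> ww + 1"
  using ww_ne[OF card4] ww1_ne[OF card4] by metis+

lemma e_add: "(e (add4 a b) :: 'a) = e a + e b"
  by (cases a; cases b) (simp_all add: xx[OF card4] xxy[OF card4] add_ac)

lemma e_mul: "(e (mul4 a b) :: 'a) = e a * e b"
  by (cases a; cases b) (simp_all add: ww_sq[OF card4] xx[OF card4] xxy[OF card4] distrib_left distrib_right add_ac)

lemma e_eq_iff: "((e a :: 'a) = e b) \<longleftrightarrow> a = b"
  by (cases a; cases b) (simp_all add: ww_facts)

lemma e_0_iff: "((e a :: 'a) = 0) \<longleftrightarrow> a = G0"
  using e_eq_iff[of a G0] by simp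

lemma ex_e: "\<exists>g. (x::'a) = e g"
proof -
  have "x \<in> {0,1,ww,ww+1}" using univ_ww[OF card4] by blast
  then show ?thesis by (metis e.simps empty_iff insert_iff)
qed

lemma V_scale: "(V (scalec k c) :: 'a^4) = smul4 (e k) (V c)"
  by (cases c) (simp add: e_mul)

lemma V_add: "(V (addc a b) :: 'a^4) = V a + V b"
  by (cases a; cases b) (simp add: e_add)

lemma V_dot: "dot4 (V c :: 'a^4) (V x) = e (dotc c x)"
  by (cases c; cases x) (simp add: e_add e_mul)

lemma V_eq_iff: "((V a :: 'a^4) = V b) \<longleftrightarrow> a = b"
  by (cases a; cases b) (simp add: vec4_eq_iff e_eq_iff)

lemma V_zero_iff: "((V a :: 'a^4) = 0) \<longleftrightarrow> a = zc"
  by (cases a) (simp add: zero_vec4 vec4_eq_iff e_0_iff zc_def)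

lemma ex_V: "\<exists>c. (x::'a^4) = V c"
proof -
  obtain a b c d where "x$0 = (e a::'a)" "x$1 = (e b::'a)" "x$2 = (e c::'a)" "x$3 = (e d::'a)"
    using ex_e by metis
  then have "x = V (a,b,c,d)" using vec4_all[of x] by simp
  then show ?thesis by blast
qed

lemma Pt_norm: "c \<noteq> zc \<Longrightarrow> (Pt (normc c) :: ('a^4) set) = Pt c"
  unfolding Pt_def normc_def using firstnz_zero[of c]
  by (simp add: V_scale pt_smul e_0_iff inv4_ne)

lemma Pl_norm: "c \<noteq> zc \<Longrightarrow> (Pl (normc c) :: ('a^4) set set) = Pl c"
  unfolding Pl_def normc_def using firstnz_zero[of c]
  by (simp add: V_scale plane_smul e_0_iff inv4_ne)

lemma PG_points_eq: "(PG_points :: ('a^4) set set) = Pt ` NP"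
proof
  show "(PG_points :: ('a^4) set set) \<subseteq> Pt ` NP"
  proof
    fix P :: "('a^4) set" assume "P \<in> PG_points"
    then obtain x where x: "x \<noteq> 0" "P = pt x" unfolding PG_points_def by auto
    obtain c where c: "x = V c" using ex_V by blast
    have "c \<noteq> zc" using x c V_zero_iff by auto
    then have "P = Pt (normc c)" using Pt_norm x c unfolding Pt_def by simp
    then show "P \<in> Pt ` NP" using normc_NP[OF \<open>c \<noteq> zc\<close>] by blast
  qed
  show "Pt ` NP \<subseteq> (PG_points :: ('a^4) set set)"
    unfolding Pt_def PG_points_def using NP_nz V_zero_iff by blast
qed

lemma PG_planes_eq: "(PG_planes :: ('a^4) set set set) = Pl ` NP"
proof
  show "(PG_planes :: ('a^4) set set set) \<subseteq> Pl ` NP"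
  proof
    fix P :: "('a^4) set set" assume "P \<in> PG_planes"
    then obtain x where x: "x \<noteq> 0" "P = plane x" unfolding PG_planes_def by auto
    obtain c where c: "x = V c" using ex_V by blast
    have "c \<noteq> zc" using x c V_zero_iff by auto
    then have "P = Pl (normc c)" using Pl_norm x c unfolding Pl_def by simp
    then show "P \<in> Pl ` NP" using normc_NP[OF \<open>c \<noteq> zc\<close>] by blast
  qed
  show "Pl ` NP \<subseteq> (PG_planes :: ('a^4) set set set)"
    unfolding Pl_def PG_planes_def using NP_nz V_zero_iff by blast
qed

lemma Pt_inj: "inj_on (Pt :: cd \<Rightarrow> ('a^4) set) NP"
proof
  fix a b assume a: "a \<in> NP" and b: "b \<in> NP" and eq: "(Pt a :: ('a^4) set) = Pt b"
  obtain k :: 'a where k: "k \<noteq> 0" "V b = smul4 k (V a)" using pt_eq eq unfolding Pt_def by blast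
  obtain g where g: "k = e g" using ex_e by blast
  have g0: "g \<noteq> G0" using k g by auto
  have "(V b :: 'a^4) = V (scalec g a)" using k g V_scale by simp
  then have bs: "b = scalec g a" using V_eq_iff by blast
  then have "firstnz b = mul4 g (firstnz a)" using firstnz_scale g0 by simp
  then have "g = G1" using a b unfolding NP_def by (simp add: mul4_1)
  then show "a = b" using bs scalec_1 by simp
qed

lemma in_Pl: "x \<in> NP \<Longrightarrow> (Pt x :: ('a^4) set) \<in> Pl c \<longleftrightarrow> dotc c x = G0"
  unfolding Pt_def Pl_def
  using in_plane[of "V x :: 'a^4" "V c"] NP_nz[of x] V_zero_iff[of x] V_dot[of c x] e_0_iff
  by simp

end



definition gl :: "g4 list" where "gl = [G0,G1,GW,GX]"

definition NPL :: "cd list" where "NPL = [(G0,G0,G0,G1), (G0,G0,G1,G0), (G0,G0,G1,G1), (G0,G0,G1,GW), (G0,G0,G1,GX), (G0,G1,G0,G0), (G0,G1,G0,G1), (G0,G1,G0,GW), (G0,G1,G0,GX), (G0,G1,G1,G0), (G0,G1,G1,G1), (G0,G1,G1,GW), (G0,G1,G1,GX), (G0,G1,GW,G0), (G0,G1,GW,G1), (G0,G1,GW,GW), (G0,G1,GW,GX), (G0,G1,GX,G0), (G0,G1,GX,G1), (G0,G1,GX,GW), (G0,G1,GX,GX), (G1,G0,G0,G0), (G1,G0,G0,G1), (G1,G0,G0,GW), (G1,G0,G0,GX), (G1,G0,G1,G0), (G1,G0,G1,G1), (G1,G0,G1,GW), (G1,G0,G1,GX), (G1,G0,GW,G0), (G1,G0,GW,G1),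 (G1,G0,GW,GW), (G1,G0,GW,GX), (G1,G0,GX,G0), (G1,G0,GX,G1), (G1,G0,GX,GW), (G1,G0,GX,GX), (G1,G1,G0,G0), (G1,G1,G0,G1), (G1,G1,G0,GW), (G1,G1,G0,GX), (G1,G1,G1,G0), (G1,G1,G1,G1), (G1,G1,G1,GW), (G1,G1,G1,GX), (G1,G1,GW,G0), (G1,G1,GW,G1), (G1,G1,GW,GW), (G1,G1,GW,GX), (G1,G1,GX,G0), (G1,G1,GX,G1), (G1,G1,GX,GW), (G1,G1,GX,GX), (G1,GW,G0,G0), (G1,GW,G0,G1), (G1,GW,G0,GW), (G1,GW,G0,GX), (G1,GW,G1,G0), (G1,GW,G1,G1), (G1,GW,G1,GW), (G1,GW,G1,GX), (G1,GW,GW,G0), (G1,GW,GW,G1), (G1,GW,GW,GW), (G1,GW,GW,GX), (G1,GW,GX,G0), (G1,GW,GX,G1), (G1,GW,GX,GW), (G1,GW,GX,GX), (G1,GX,G0,G0), (G1,GX,G0,G1), (G1,GX,G0,GW), (G1,GX,G0,GX), (G1,GX,G1,G0), (G1,GX,G1,G1), (G1,GX,G1,GW), (G1,GX,G1,GX), (G1,GX,GW,G0), (G1,GX,GW,G1), (G1,GX,GW,GW), (G1,GX,GW,GX), (G1,GX,GX,G0), (G1,GX,GX,G1), (G1,GX,GX,GW), (G1,GX,GX,GX)]"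

definition UL :: "cd list" where "UL = [(G1,G0,G0,G0), (G0,G1,G0,G0), (G0,G0,G1,G0), (G0,G0,G0,G1), (G1,G1,G0,G0), (G1,GX,G0,G0), (G1,GW,G0,G0), (G1,G0,G1,G0), (G1,G0,GX,G0), (G1,G0,GW,G0), (G1,G0,G0,G1), (G1,G0,G0,GX), (G1,G0,G0,GW), (G0,G1,G1,G0), (G0,G1,GX,G0), (G0,G1,GW,G0), (G0,G1,G0,G1), (G0,G1,G0,GX), (G0,G1,G0,GW), (G0,G0,G1,G1), (G0,G0,G1,GX), (G0,G0,G1,GW)]"

definition cubc :: "g4 \<Rightarrow> cd" where "cubc g = (mul4 g (mul4 g g), mul4 g g, g, G1)"
definition oscc :: "g4 \<Rightarrow> cd" where "oscc g = (G1, g, mul4 g g, mul4 g (mul4 g g))"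
definition tanc :: "g4 \<Rightarrow> cd" where "tanc g = (mul4 g g, G0, G1, G0)"

definition pairs15 :: "(g4 \<times> g4) list" where
  "pairs15 = filter (\<lambda>p. p \<noteq> (G0,G0)) (List.product gl gl)"

definition linel :: "cd \<Rightarrow> cd \<Rightarrow> cd list" where
  "linel p r = map (\<lambda>(a,b). normc (addc (scalec a p) (scalec b r))) pairs15"

definition CCL :: "cd list" where
  "CCL = map normc [(G1,G0,G0,G0), cubc G0, cubc G1, cubc GW, cubc GX]"
definition GGL :: "cd list" where
  "GGL = [(G0,G0,G0,G1), oscc G0, oscc G1, oscc GW, oscc GX]"
definition TTL :: "cd list" where
  "TTL = linel (G1,G0,G0,G0) (G0,G1,G0,G0) @ linel (cubc G0) (tanc G0) @ linel (cubc G1) (tanc G1)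
     @ linel (cubc GW) (tanc GW) @ linel (cubc GX) (tanc GX)"

lemma CCL_lit: "CCL = [(G1,G0,G0,G0), (G0,G0,G0,G1), (G1,G1,G1,G1), (G1,GX,GW,G1), (G1,GW,GX,G1)]"
  by (simp add: CCL_def cubc_def normc_def)
lemma GGL_lit: "GGL = [(G0,G0,G0,G1), (G1,G0,G0,G0), (G1,G1,G1,G1), (G1,GW,GX,G1), (G1,GX,GW,G1)]"
  by (simp add: GGL_def oscc_def)
lemma TTL_lit: "TTL = [(G0,G1,G0,G0), (G0,G1,G0,G0), (G0,G1,G0,G0), (G1,G0,G0,G0), (G1,G1,G0,G0), (G1,GW,G0,G0), (G1,GX,G0,G0), (G1,G0,G0,G0), (G1,GX,G0,G0), (G1,G1,G0,G0), (G1,GW,G0,G0), (G1,G0,G0,G0), (G1,GW,G0,G0), (G1,GX,G0,G0), (G1,G1,G0,G0), (G0,G0,G1,G0), (G0,G0,G1,G0), (G0,G0,G1,G0), (G0,G0,G0,G1), (G0,G0,G1,G1), (G0,G0,G1,GX), (G0,G0,G1,GW), (G0,G0,G0,G1), (G0,G0,G1,GW), (G0,G0,G1,G1), (G0,G0,G1,GX), (G0,G0,G0,G1), (G0,G0,G1,GX), (G0,G0,G1,GW), (G0,G0,G1,G1), (G1,G0,G1,G0), (G1,G0,G1,G0), (G1,G0,G1,G0), (G1,G1,G1,G1), (G0,G1,G0,G1), (G1,GW,G1,GW), (G1,GX,G1,GX), (G1,G1,G1,G1), (G1,GX,G1,GX), (G0,G1,G0,G1), (G1,GW,G1,GW), (G1,G1,G1,G1),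 (G1,GW,G1,GW), (G1,GX,G1,GX), (G0,G1,G0,G1), (G1,G0,GW,G0), (G1,G0,GW,G0), (G1,G0,GW,G0), (G1,GX,GW,G1), (G1,GW,GW,GX), (G0,G1,G0,GW), (G1,G1,GW,GW), (G1,GX,GW,G1), (G1,G1,GW,GW), (G1,GW,GW,GX), (G0,G1,G0,GW), (G1,GX,GW,G1), (G0,G1,G0,GW), (G1,G1,GW,GW), (G1,GW,GW,GX), (G1,G0,GX,G0), (G1,G0,GX,G0), (G1,G0,GX,G0), (G1,GW,GX,G1), (G1,GX,GX,GW), (G1,G1,GX,GX), (G0,G1,G0,GX), (G1,GW,GX,G1), (G0,G1,G0,GX), (G1,GX,GX,GW), (G1,G1,GX,GX), (G1,GW,GX,G1), (G1,G1,GX,GX), (G0,G1,G0,GX), (G1,GX,GX,GW)]"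
  by (simp add: TTL_def linel_def pairs15_def gl_def cubc_def tanc_def normc_def)

definition cntC :: "cd \<Rightarrow> nat" where "cntC c = length (filter (\<lambda>x. dotc c x = G0) CCL)"
definition cntG :: "cd \<Rightarrow> nat" where "cntG x = length (filter (\<lambda>c. dotc c x = G0) GGL)"

definition M1 where "M1 = filter (\<lambda>x. x \<notin> set CCL \<and> x \<in> set TTL) NPL"
definition Mmu where "Mmu k = filter (\<lambda>x. x \<notin> set CCL \<and> x \<notin> set TTL \<and> cntG x = k) NPL"
definition Nd where "Nd k = filter (\<lambda>c. cntC c = k) NPL"
definition N1b where "N1b = filter (\<lambda>c. c \<notin> set GGL \<and> cntC c = 1) NPL"

lemma M1_lit: "M1 = [(G0,G0,G1,G0), (G0,G0,G1,G1), (G0,G0,G1,GW), (G0,G0,G1,GX), (G0,G1,G0,G0), (G0,G1,G0,G1), (G0,G1,G0,GW), (G0,G1,G0,GX), (G1,G0,G1,G0), (G1,G0,GW,G0), (G1,G0,GX,G0), (G1,G1,G0,G0), (G1,G1,GW,GW), (G1,G1,GX,GX), (G1,GW,G0,G0), (G1,GW,G1,GW), (G1,GW,GW,GX), (G1,GX,G0,G0), (G1,GX,G1,GX), (G1,GX,GX,GW)]"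
  by (simp add: M1_def NPL_def CCL_lit TTL_lit)
lemma M2_lit: "Mmu 3 = [(G0,G1,G1,G0), (G0,G1,G1,G1), (G0,G1,GW,G0), (G0,G1,GW,GX), (G0,G1,GX,G0), (G0,G1,GX,GW), (G1,G0,G0,G1), (G1,G1,G1,G0), (G1,GW,GX,G0), (G1,GX,GW,G0)]"
  by (simp add: Mmu_def NPL_def CCL_lit TTL_lit cntG_def GGL_lit)
lemma M3_lit: "Mmu 1 = [(G0,G1,G1,GW), (G0,G1,G1,GX), (G0,G1,GW,G1), (G0,G1,GW,GW), (G0,G1,GX,G1), (G0,G1,GX,GX), (G1,G0,G1,GW), (G1,G0,G1,GX), (G1,G0,GW,GW), (G1,G0,GW,GX), (G1,G0,GX,GW), (G1,G0,GX,GX), (G1,G1,G0,GW), (G1,G1,G0,GX), (G1,G1,GW,G0), (G1,G1,GW,G1), (G1,G1,GX,G0), (G1,G1,GX,G1), (G1,GW,G0,GW), (G1,GW,G0,GX), (G1,GW,G1,G0), (G1,GW,G1,G1), (G1,GW,GW,G0), (G1,GW,GW,G1), (G1,GX,G0,GW), (G1,GX,G0,GX), (G1,GX,G1,G0), (G1,GX,G1,G1), (G1,GX,GX,G0), (G1,GX,GX,G1)]"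
  by (simp add: Mmu_def NPL_def CCL_lit TTL_lit cntG_def GGL_lit)
lemma M4_lit: "Mmu 0 = [(G1,G0,G0,GW), (G1,G0,G0,GX), (G1,G0,G1,G1), (G1,G0,GW,G1), (G1,G0,GX,G1), (G1,G1,G0,G1), (G1,G1,G1,GW), (G1,G1,G1,GX), (G1,G1,GW,GX), (G1,G1,GX,GW), (G1,GW,G0,G1), (G1,GW,G1,GX), (G1,GW,GW,GW), (G1,GW,GX,GW), (G1,GW,GX,GX), (G1,GX,G0,G1), (G1,GX,G1,GW), (G1,GX,GW,GW), (G1,GX,GW,GX), (G1,GX,GX,GX)]"
  by (simp add: Mmu_def NPL_def CCL_lit TTL_lit cntG_def GGL_lit)
lemma N1_lit: "Nd 2 = [(G0,G0,G1,G0), (G0,G0,G1,G1), (G0,G0,G1,GW), (G0,G0,G1,GX), (G0,G1,G0,G0), (G0,G1,G0,G1), (G0,G1,G0,GW), (G0,G1,G0,GX), (G1,G0,G1,G0), (G1,G0,GW,G0), (G1,G0,GX,G0), (G1,G1,G0,G0), (G1,G1,GW,GW), (G1,G1,GX,GX), (G1,GW,G0,G0), (G1,GW,G1,GW), (G1,GW,GW,GX), (G1,GX,G0,G0), (G1,GX,G1,GX), (G1,GX,GX,GW)]"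
  by (simp add: Nd_def NPL_def CCL_lit cntC_def)
lemma N2_lit: "Nd 3 = [(G0,G1,G1,G0), (G0,G1,G1,G1), (G0,G1,GW,G0), (G0,G1,GW,GX), (G0,G1,GX,G0), (G0,G1,GX,GW), (G1,G0,G0,G1), (G1,G1,G1,G0), (G1,GW,GX,G0), (G1,GX,GW,G0)]"
  by (simp add: Nd_def NPL_def CCL_lit cntC_def)
lemma N3_lit: "N1b = [(G0,G1,G1,GW), (G0,G1,G1,GX), (G0,G1,GW,G1), (G0,G1,GW,GW), (G0,G1,GX,G1), (G0,G1,GX,GX), (G1,G0,G1,GW), (G1,G0,G1,GX), (G1,G0,GW,GW), (G1,G0,GW,GX), (G1,G0,GX,GW), (G1,G0,GX,GX), (G1,G1,G0,GW), (G1,G1,G0,GX), (G1,G1,GW,G0), (G1,G1,GW,G1), (G1,G1,GX,G0), (G1,G1,GX,G1), (G1,GW,G0,GW), (G1,GW,G0,GX), (G1,GW,G1,G0), (G1,GW,G1,G1), (G1,GW,GW,G0), (G1,GW,GW,G1), (G1,GX,G0,GW), (G1,GX,G0,GX), (G1,GX,G1,G0), (G1,GX,G1,G1), (G1,GX,GX,G0), (G1,GX,GX,G1)]"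
  by (simp add: N1b_def NPL_def CCL_lit cntC_def GGL_lit)
lemma N4_lit: "Nd 0 = [(G1,G0,G0,GW), (G1,G0,G0,GX), (G1,G0,G1,G1), (G1,G0,GW,G1), (G1,G0,GX,G1), (G1,G1,G0,G1), (G1,G1,G1,GW), (G1,G1,G1,GX), (G1,G1,GW,GX), (G1,G1,GX,GW), (G1,GW,G0,G1), (G1,GW,G1,GX), (G1,GW,GW,GW), (G1,GW,GX,GW), (G1,GW,GX,GX), (G1,GX,G0,G1), (G1,GX,G1,GW), (G1,GX,GW,GW), (G1,GX,GW,GX), (G1,GX,GX,GX)]"
  by (simp add: Nd_def NPL_def CCL_lit cntC_def)




lemma NPL_sub: "set NPL \<subseteq> NP"
  by (simp add: NPL_def NP_def)

lemma NP_sub: "NP \<subseteq> set NPL"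
proof
  fix c assume "c \<in> NP"
  then have h: "firstnz c = G1" unfolding NP_def by simp
  obtain a b x y where c: "c = (a,b,x,y)" by (cases c)
  show "c \<in> set NPL" using h unfolding c
    by (cases a; cases b; cases x; cases y) (simp_all add: NPL_def)
qed

lemma set_NPL: "set NPL = NP"
  using NPL_sub NP_sub by blast

lemma distinct_NPL: "distinct NPL"
  by (simp add: NPL_def)

lemma UL_sub: "set UL \<subseteq> NP"
  by (simp add: UL_def NP_def)

lemma UL_sep: "distinct (map (\<lambda>c. map (\<lambda>x. dotc c x = G0) UL) NPL)"
  by (simp add: NPL_def UL_def)

lemma cubc_nz: "cubc g \<noteq> zc" by (simp add: cubc_def zc_def)

context
  fixes F :: "'a::{field,finite} itself"
  assumes card4: "CARD('a) = 4"
begin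

lemma Pl_inj: "inj_on (Pl :: cd \<Rightarrow> ('a^4) set set) (set NPL)"
proof
  fix a b assume a: "a \<in> set NPL" and b: "b \<in> set NPL" and eq: "(Pl a :: ('a^4) set set) = Pl b"
  have eqm: "map (\<lambda>x. dotc a x = G0) UL = map (\<lambda>x. dotc b x = G0) UL"
  proof (rule map_cong[OF refl])
    fix x assume "x \<in> set UL"
    then have x: "x \<in> NP" using UL_sub by blast
    show "(dotc a x = G0) = (dotc b x = G0)"
      using in_Pl[OF card4 x, of a] in_Pl[OF card4 x, of b] eq by simp
  qed
  have inj: "inj_on (\<lambda>c. map (\<lambda>x. dotc c x = G0) UL) (set NPL)"
    using UL_sep unfolding distinct_map by (rule conjunct2)
  show "a = b" by (rule inj_onD[OF inj eqm a b])
qed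

lemma Pt_inj': "inj_on (Pt :: cd \<Rightarrow> ('a^4) set) NP"
  by (rule Pt_inj[OF card4])

lemma card_pts:
  assumes "set xs \<subseteq> NP" "distinct xs"
  shows "card {P \<in> (Pt :: cd \<Rightarrow> ('a^4) set) ` set xs. P \<in> Pl c} = length (filter (\<lambda>x. dotc c x = G0) xs)"
proof -
  have H: "\<forall>x\<in>set xs. ((Pt x :: ('a^4) set) \<in> Pl c) = (dotc c x = G0)"
    using assms(1) in_Pl[OF card4] by blast
  have "{P \<in> (Pt :: cd \<Rightarrow> ('a^4) set) ` set xs. P \<in> Pl c} = Pt ` {x \<in> set xs. (Pt x :: ('a^4) set) \<in> Pl c}"
    by blast
  also have "{x \<in> set xs. (Pt x :: ('a^4) set) \<in> Pl c} = {x \<in> set xs. dotc c x = G0}"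
    using H by blast
  also have "\<dots> = set (filter (\<lambda>x. dotc c x = G0) xs)" by simp
  finally have eq: "{P \<in> (Pt :: cd \<Rightarrow> ('a^4) set) ` set xs. P \<in> Pl c} = Pt ` set (filter (\<lambda>x. dotc c x = G0) xs)" .
  have inj: "inj_on (Pt :: cd \<Rightarrow> ('a^4) set) (set (filter (\<lambda>x. dotc c x = G0) xs))"
    by (rule inj_on_subset[OF Pt_inj']) (use assms(1) in auto)
  have "card {P \<in> (Pt :: cd \<Rightarrow> ('a^4) set) ` set xs. P \<in> Pl c} = card (set (filter (\<lambda>x. dotc c x = G0) xs))"
    unfolding eq by (rule card_image[OF inj])
  also have "\<dots> = length (filter (\<lambda>x. dotc c x = G0) xs)"
    by (rule distinct_card[OF distinct_filter[OF assms(2)]])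
  finally show ?thesis .
qed

lemma card_pls:
  assumes "set cs \<subseteq> set NPL" "distinct cs" "x \<in> NP"
  shows "card {\<pi> \<in> (Pl :: cd \<Rightarrow> ('a^4) set set) ` set cs. Pt x \<in> \<pi>} = length (filter (\<lambda>c. dotc c x = G0) cs)"
proof -
  have H: "\<forall>c\<in>set cs. ((Pt x :: ('a^4) set) \<in> Pl c) = (dotc c x = G0)"
    using assms(3) in_Pl[OF card4] by blast
  have "{\<pi> \<in> (Pl :: cd \<Rightarrow> ('a^4) set set) ` set cs. Pt x \<in> \<pi>} = Pl ` {c \<in> set cs. (Pt x :: ('a^4) set) \<in> Pl c}"
    by blast
  also have "{c \<in> set cs. (Pt x :: ('a^4) set) \<in> Pl c} = {c \<in> set cs. dotc c x = G0}"
    using H by blast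
  also have "\<dots> = set (filter (\<lambda>c. dotc c x = G0) cs)" by simp
  finally have eq: "{\<pi> \<in> (Pl :: cd \<Rightarrow> ('a^4) set set) ` set cs. Pt x \<in> \<pi>} = Pl ` set (filter (\<lambda>c. dotc c x = G0) cs)" .
  have inj: "inj_on (Pl :: cd \<Rightarrow> ('a^4) set set) (set (filter (\<lambda>c. dotc c x = G0) cs))"
    by (rule inj_on_subset[OF Pl_inj]) (use assms(1) in auto)
  have "card {\<pi> \<in> (Pl :: cd \<Rightarrow> ('a^4) set set) ` set cs. Pt x \<in> \<pi>} = card (set (filter (\<lambda>c. dotc c x = G0) cs))"
    unfolding eq by (rule card_image[OF inj])
  also have "\<dots> = length (filter (\<lambda>c. dotc c x = G0) cs)"
    by (rule distinct_card[OF distinct_filter[OF assms(2)]])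
  finally show ?thesis .
qed

lemma ex_opt: "(\<exists>t::'a option. Q t) \<longleftrightarrow> Q None \<or> Q (Some (e G0)) \<or> Q (Some (e G1)) \<or> Q (Some (e GW)) \<or> Q (Some (e GX))"
proof
  assume "\<exists>t. Q t"
  then obtain t where q: "Q t" by blast
  show "Q None \<or> Q (Some (e G0)) \<or> Q (Some (e G1)) \<or> Q (Some (e GW)) \<or> Q (Some (e GX))"
  proof (cases t)
    case None then show ?thesis using q by simp
  next
    case (Some s)
    obtain g where g: "s = e g" using ex_e[OF card4] by blast
    show ?thesis using q Some g by (cases g) simp_all
  qed
qed blast

lemma range_opt: "range (f :: 'a option \<Rightarrow> 'b) = {f None, f (Some (e G0)), f (Some (e G1)), f (Some (e GW)), f (Some (e GX))}"
proof -
  have "y \<in> range f \<longleftrightarrow> y \<in> {f None, f (Some (e G0)), f (Some (e G1)), f (Some (e GW)), f (Some (e GX))}" for y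
    using ex_opt[of "\<lambda>t. y = f t"] by auto
  then show ?thesis by blast
qed

lemma e_pow2: "(e g :: 'a)^2 = e (mul4 g g)"
  by (simp add: power2_eq_square e_mul[OF card4])

lemma e_pow3: "(e g :: 'a)^3 = e (mul4 g (mul4 g g))"
  by (simp add: power3_eq_cube e_mul[OF card4] mult.assoc)

lemma cubic_Some: "(cubic_pt (Some (e g)) :: ('a^4) set) = Pt (normc (cubc g))"
proof -
  have "(cubic_pt (Some (e g)) :: ('a^4) set) = Pt (cubc g)"
    unfolding cubic_pt_def Pt_def cubc_def by (simp add: e_pow2 e_pow3)
  then show ?thesis using Pt_norm[OF card4 cubc_nz] by simp
qed

lemma cubic_None: "(cubic_pt None :: ('a^4) set) = Pt (normc (G1,G0,G0,G0))"
  unfolding cubic_pt_def Pt_def by (simp add: normc_def)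

lemma twisted_cubic_eq: "(twisted_cubic :: ('a^4) set set) = Pt ` set CCL"
  unfolding twisted_cubic_def range_opt cubic_Some cubic_None CCL_def by simp

lemma osc_Some: "(osc_plane (Some (e g)) :: ('a^4) set set) = Pl (oscc g)"
  unfolding osc_plane_def Pl_def oscc_def
  by (simp add: e_pow2 e_pow3 neg_eq[OF card4] three_eq[OF card4])

lemma osc_None: "(osc_plane None :: ('a^4) set set) = Pl (G0,G0,G0,G1)"
  unfolding osc_plane_def Pl_def by simp

lemma Gamma_eq: "(Gamma_planes :: ('a^4) set set set) = Pl ` set GGL"
  unfolding Gamma_planes_def range_opt osc_Some osc_None GGL_def by simp

lemma line_eq:
  assumes nd: "\<forall>(a,b)\<in>set pairs15. addc (scalec a p) (scalec b r) \<noteq> zc"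
  shows "line_through (V p :: 'a^4) (V r) = Pt ` set (linel p r)"
proof
  show "line_through (V p :: 'a^4) (V r) \<subseteq> Pt ` set (linel p r)"
  proof
    fix P assume "P \<in> line_through (V p :: 'a^4) (V r)"
    then obtain a b :: 'a where ab: "a \<noteq> 0 \<or> b \<noteq> 0" "P = pt (smul4 a (V p) + smul4 b (V r))"
      unfolding line_through_def by blast
    obtain ga where ga: "a = e ga" using ex_e[OF card4] by blast
    obtain gb where gb: "b = e gb" using ex_e[OF card4] by blast
    have mem: "(ga,gb) \<in> set pairs15" using ab(1) ga gb
      by (cases ga; cases gb) (simp_all add: pairs15_def gl_def)
    have "P = Pt (addc (scalec ga p) (scalec gb r))"
      using ab(2) ga gb by (simp add: Pt_def V_add[OF card4] V_scale[OF card4])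
    also have "\<dots> = Pt (normc (addc (scalec ga p) (scalec gb r)))"
    proof -
      have nz: "addc (scalec ga p) (scalec gb r) \<noteq> zc" using nd mem by auto
      show ?thesis using Pt_norm[OF card4 nz] by simp
    qed
    finally show "P \<in> Pt ` set (linel p r)" unfolding linel_def using mem by force
  qed
  show "Pt ` set (linel p r) \<subseteq> line_through (V p :: 'a^4) (V r)"
  proof
    fix P :: "('a^4) set" assume "P \<in> Pt ` set (linel p r)"
    then obtain ga gb where mem: "(ga,gb) \<in> set pairs15" and P: "P = Pt (normc (addc (scalec ga p) (scalec gb r)))"
      unfolding linel_def by auto
    have nz: "addc (scalec ga p) (scalec gb r) \<noteq> zc" using nd mem by auto
    have "P = Pt (addc (scalec ga p) (scalec gb r))"
      using P Pt_norm[OF card4 nz] by simp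
    also have "\<dots> = pt (smul4 (e ga) (V p) + smul4 (e gb) (V r :: 'a^4))"
      by (simp add: Pt_def V_add[OF card4] V_scale[OF card4])
    finally have P2: "P = pt (smul4 (e ga) (V p) + smul4 (e gb) (V r :: 'a^4))" .
    have "(e ga :: 'a) \<noteq> 0 \<or> (e gb :: 'a) \<noteq> 0" using mem e_0_iff[OF card4]
      by (auto simp: pairs15_def)
    then show "P \<in> line_through (V p :: 'a^4) (V r)" unfolding line_through_def using P2 by blast
  qed
qed

lemma tangent_None: "(tangent None :: ('a^4) set set) = Pt ` set (linel (G1,G0,G0,G0) (G0,G1,G0,G0))"
proof -
  have "(tangent None :: ('a^4) set set) = line_through (V (G1,G0,G0,G0)) (V (G0,G1,G0,G0))"
    unfolding tangent_def by simp
  also have "\<dots> = Pt ` set (linel (G1,G0,G0,G0) (G0,G1,G0,G0))"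
    by (rule line_eq) (simp add: pairs15_def gl_def zc_def)
  finally show ?thesis .
qed

lemma tangent_Some: "(tangent (Some (e g)) :: ('a^4) set set) = Pt ` set (linel (cubc g) (tanc g))"
proof -
  have "(tangent (Some (e g)) :: ('a^4) set set) = line_through (V (cubc g)) (V (tanc g))"
    unfolding tangent_def cubc_def tanc_def by (simp add: e_pow2 e_pow3 three_eq[OF card4] two_eq[OF card4])
  also have "\<dots> = Pt ` set (linel (cubc g) (tanc g))"
    by (rule line_eq) (cases g; simp add: pairs15_def gl_def zc_def cubc_def tanc_def)
  finally show ?thesis .
qed

lemma tangent_ex: "(\<exists>t. (P :: ('a^4) set) \<in> tangent t) \<longleftrightarrow> P \<in> Pt ` set TTL"
  by (simp only: ex_opt[of "\<lambda>t. P \<in> tangent t"] tangent_None tangent_Some TTL_def set_append image_Un Un_iff)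

end



lemma CCL_sub: "set CCL \<subseteq> NP" by (simp add: CCL_lit NP_def)
lemma TTL_sub: "set TTL \<subseteq> NP" by (simp add: TTL_lit NP_def)
lemma GGL_sub: "set GGL \<subseteq> set NPL" by (simp add: GGL_lit NPL_def)
lemma CCL_dist: "distinct CCL" by (simp add: CCL_lit)
lemma GGL_dist: "distinct GGL" by (simp add: GGL_lit)

lemma filter_NPL_sub: "set (filter P NPL) \<subseteq> set NPL" by auto
lemma filter_NPL_sub': "set (filter P NPL) \<subseteq> NP" using set_NPL by auto
lemma filter_NPL_dist: "distinct (filter P NPL)" by (rule distinct_filter[OF distinct_NPL])

definition NLs :: "cd list list" where "NLs = [GGL, Nd 2, Nd 3, N1b, Nd 0]"
definition MLs :: "cd list list" where "MLs = [CCL, M1, Mmu 3, Mmu 1, Mmu 0]"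

lemma NLs_ok: "\<forall>i<5. set (NLs!i) \<subseteq> set NPL \<and> distinct (NLs!i)"
  by (simp add: NLs_def less_Suc_eq numeral_eq_Suc GGL_sub GGL_dist Nd_def N1b_def filter_NPL_sub filter_NPL_dist del: set_filter)

lemma MLs_ok: "\<forall>j<5. set (MLs!j) \<subseteq> NP \<and> distinct (MLs!j)"
  by (simp add: MLs_def less_Suc_eq numeral_eq_Suc CCL_sub CCL_dist M1_def Mmu_def filter_NPL_sub' filter_NPL_dist del: set_filter)

lemma all5: "(\<forall>i<(5::nat). P i) \<longleftrightarrow> P 0 \<and> P 1 \<and> P 2 \<and> P 3 \<and> P 4"
  by (auto simp: less_Suc_eq numeral_eq_Suc)

lemma CONC: "\<forall>i<5. \<forall>j<5.
   list_all (\<lambda>c. length (filter (\<lambda>x. dotc c x = G0) (MLs!j)) = [[1,8,6,6,0],[2,7,1,6,5],[3,2,4,6,6],[1,4,2,10,4],[0,5,3,6,7::nat]]!i!j) (NLs!i)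
 \<and> list_all (\<lambda>x. length (filter (\<lambda>c. dotc c x = G0) (NLs!i)) = [[1,2,3,1,0],[8,7,2,4,5],[6,1,4,2,3],[6,6,6,10,6],[0,5,6,4,7::nat]]!i!j) (MLs!j)"
  unfolding all5 NLs_def MLs_def GGL_lit CCL_lit M1_lit M2_lit M3_lit M4_lit N1_lit N2_lit N3_lit N4_lit
  by simp

context
  fixes F :: "'a::{field,finite} itself"
  assumes card4: "CARD('a) = 4"
begin

lemma pt_mem: "x \<in> NP \<Longrightarrow> set xs \<subseteq> NP \<Longrightarrow> ((Pt x :: ('a^4) set) \<in> Pt ` set xs) = (x \<in> set xs)"
  by (rule inj_on_image_mem_iff[OF Pt_inj']) (rule card4)

lemma pl_mem: "c \<in> NP \<Longrightarrow> set cs \<subseteq> set NPL \<Longrightarrow> ((Pl c :: ('a^4) set set) \<in> Pl ` set cs) = (c \<in> set cs)"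
  by (rule inj_on_image_mem_iff[OF Pl_inj]) (simp_all add: card4 set_NPL)

lemma points_collect: "{P \<in> (PG_points :: ('a^4) set set). Q P} = Pt ` {x \<in> NP. Q (Pt x)}"
  unfolding PG_points_eq[OF card4] by blast

lemma planes_collect: "{P \<in> (PG_planes :: ('a^4) set set set). Q P} = Pl ` {x \<in> NP. Q (Pl x)}"
  unfolding PG_planes_eq[OF card4] by blast

lemma in_tc: "x \<in> NP \<Longrightarrow> ((Pt x :: ('a^4) set) \<in> twisted_cubic) = (x \<in> set CCL)"
  unfolding twisted_cubic_eq[OF card4] by (rule pt_mem[OF _ CCL_sub])

lemma in_tan: "x \<in> NP \<Longrightarrow> (\<exists>t. (Pt x :: ('a^4) set) \<in> tangent t) = (x \<in> set TTL)"
  unfolding tangent_ex[OF card4] by (rule pt_mem[OF _ TTL_sub])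

lemma cardG: "x \<in> NP \<Longrightarrow> card {\<pi> \<in> (Gamma_planes :: ('a^4) set set set). Pt x \<in> \<pi>} = cntG x"
  unfolding Gamma_eq[OF card4] cntG_def by (rule card_pls[OF card4 GGL_sub GGL_dist])

lemma cardC: "card ((Pl c :: ('a^4) set set) \<inter> twisted_cubic) = cntC c"
proof -
  have "(Pl c :: ('a^4) set set) \<inter> twisted_cubic = {P \<in> Pt ` set CCL. P \<in> Pl c}"
    unfolding twisted_cubic_eq[OF card4] by blast
  then show ?thesis unfolding cntC_def using card_pts[OF card4 CCL_sub CCL_dist] by simp
qed

lemma T_eq: "(T_points :: ('a^4) set set) = Pt ` set M1"
proof -
  have "(T_points :: ('a^4) set set) = Pt ` {x \<in> NP. (Pt x :: ('a^4) set) \<notin> twisted_cubic \<and> (\<exists>t. (Pt x :: ('a^4) set) \<in> tangent t)}"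
    unfolding T_points_def by (rule points_collect)
  also have "{x \<in> NP. (Pt x :: ('a^4) set) \<notin> twisted_cubic \<and> (\<exists>t. (Pt x :: ('a^4) set) \<in> tangent t)} = set M1"
    unfolding M1_def set_filter set_NPL using in_tc in_tan by blast
  finally show ?thesis .
qed

lemma mu_eq: "(muGamma_points k :: ('a^4) set set) = Pt ` set (Mmu k)"
proof -
  have "(muGamma_points k :: ('a^4) set set) = Pt ` {x \<in> NP. (Pt x :: ('a^4) set) \<notin> twisted_cubic \<and> (\<forall>t. (Pt x :: ('a^4) set) \<notin> tangent t)
      \<and> card {\<pi> \<in> (Gamma_planes :: ('a^4) set set set). Pt x \<in> \<pi>} = k}"
    unfolding muGamma_points_def by (rule points_collect)
  also have "{x \<in> NP. (Pt x :: ('a^4) set) \<notin> twisted_cubic \<and> (\<forall>t. (Pt x :: ('a^4) set) \<notin> tangent t)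
      \<and> card {\<pi> \<in> (Gamma_planes :: ('a^4) set set set). Pt x \<in> \<pi>} = k} = set (Mmu k)"
  proof -
    have "\<forall>x\<in>NP. ((Pt x :: ('a^4) set) \<notin> twisted_cubic \<and> (\<forall>t. (Pt x :: ('a^4) set) \<notin> tangent t)
      \<and> card {\<pi> \<in> (Gamma_planes :: ('a^4) set set set). Pt x \<in> \<pi>} = k)
      = (x \<notin> set CCL \<and> x \<notin> set TTL \<and> cntG x = k)"
    proof
      fix x assume x: "x \<in> NP"
      have "(\<forall>t. (Pt x :: ('a^4) set) \<notin> tangent t) = (x \<notin> set TTL)" using in_tan[OF x] by blast
      then show "((Pt x :: ('a^4) set) \<notin> twisted_cubic \<and> (\<forall>t. (Pt x :: ('a^4) set) \<notin> tangent t)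
      \<and> card {\<pi> \<in> (Gamma_planes :: ('a^4) set set set). Pt x \<in> \<pi>} = k)
      = (x \<notin> set CCL \<and> x \<notin> set TTL \<and> cntG x = k)" using in_tc[OF x] cardG[OF x] by simp
    qed
    then show ?thesis unfolding Mmu_def set_filter set_NPL by blast
  qed
  finally show ?thesis .
qed

lemma dC_eq: "(dC_planes d :: ('a^4) set set set) = Pl ` set (Nd d)"
proof -
  have "(dC_planes d :: ('a^4) set set set) = Pl ` {c \<in> NP. card ((Pl c :: ('a^4) set set) \<inter> twisted_cubic) = d}"
    unfolding dC_planes_def by (rule planes_collect)
  also have "{c \<in> NP. card ((Pl c :: ('a^4) set set) \<inter> twisted_cubic) = d} = set (Nd d)"
    unfolding Nd_def set_filter set_NPL cardC by blast
  finally show ?thesis .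
qed

lemma onebar_eq: "(onebar_planes :: ('a^4) set set set) = Pl ` set N1b"
proof -
  have "(onebar_planes :: ('a^4) set set set) = Pl ` {c \<in> NP. (Pl c :: ('a^4) set set) \<notin> Gamma_planes \<and> card ((Pl c :: ('a^4) set set) \<inter> twisted_cubic) = 1}"
    unfolding onebar_planes_def by (rule planes_collect)
  also have "{c \<in> NP. (Pl c :: ('a^4) set set) \<notin> Gamma_planes \<and> card ((Pl c :: ('a^4) set set) \<inter> twisted_cubic) = 1} = set N1b"
  proof -
    have "\<forall>c\<in>NP. ((Pl c :: ('a^4) set set) \<in> Gamma_planes) = (c \<in> set GGL)"
      unfolding Gamma_eq[OF card4] using pl_mem[OF _ GGL_sub] by blast
    then show ?thesis unfolding N1b_def set_filter set_NPL cardC by blast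
  qed
  finally show ?thesis .
qed

lemma PC: "(plane_classes :: ('a^4) set set set list) = map (\<lambda>N. Pl ` set N) NLs"
  unfolding plane_classes_def NLs_def using Gamma_eq[OF card4] dC_eq onebar_eq by simp

lemma QC: "(point_classes :: ('a^4) set set list) = map (\<lambda>M. Pt ` set M) MLs"
  unfolding point_classes_def MLs_def using twisted_cubic_eq[OF card4] T_eq mu_eq by simp

lemma LT:
  assumes "set N \<subseteq> set NPL" "set M \<subseteq> NP" "distinct M"
    "list_all (\<lambda>c. length (filter (\<lambda>x. dotc c x = G0) M) = n) N"
  shows "\<forall>\<pi>\<in>(Pl :: cd \<Rightarrow> ('a^4) set set) ` set N. card {P \<in> Pt ` set M. P \<in> \<pi>} = n"
proof
  fix \<pi> assume "\<pi> \<in> (Pl :: cd \<Rightarrow> ('a^4) set set) ` set N"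
  then obtain c where c: "c \<in> set N" "\<pi> = Pl c" by blast
  have "card {P \<in> (Pt :: cd \<Rightarrow> ('a^4) set) ` set M. P \<in> Pl c} = length (filter (\<lambda>x. dotc c x = G0) M)"
    by (rule card_pts[OF card4 assms(2,3)])
  also have "\<dots> = n" using assms(4) c(1) by (simp add: list_all_iff)
  finally show "card {P \<in> Pt ` set M. P \<in> \<pi>} = n" using c(2) by simp
qed

lemma LB:
  assumes "set N \<subseteq> set NPL" "distinct N" "set M \<subseteq> NP"
    "list_all (\<lambda>x. length (filter (\<lambda>c. dotc c x = G0) N) = n) M"
  shows "\<forall>P\<in>(Pt :: cd \<Rightarrow> ('a^4) set) ` set M. card {\<pi> \<in> Pl ` set N. P \<in> \<pi>} = n"
proof
  fix P assume "P \<in> (Pt :: cd \<Rightarrow> ('a^4) set) ` set M"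
  then obtain x where x: "x \<in> set M" "P = Pt x" by blast
  have xNP: "x \<in> NP" using x(1) assms(3) by blast
  have "card {\<pi> \<in> (Pl :: cd \<Rightarrow> ('a^4) set set) ` set N. Pt x \<in> \<pi>} = length (filter (\<lambda>c. dotc c x = G0) N)"
    by (rule card_pls[OF card4 assms(1,2) xNP])
  also have "\<dots> = n" using assms(4) x(1) by (simp add: list_all_iff)
  finally show "card {\<pi> \<in> Pl ` set N. P \<in> \<pi>} = n" using x(2) by simp
qed

end

theorem mainTheorem17:
  fixes F :: "'a::{field,finite} itself"
  assumes "CARD('a) = 4"
  defines "Tab \<equiv> [[1,8,6,6,0],[2,7,1,6,5],[3,2,4,6,6],[1,4,2,10,4],[0,5,3,6,7]] :: nat list list"
      and "Bab \<equiv> [[1,2,3,1,0],[8,7,2,4,5],[6,1,4,2,3],[6,6,6,10,6],[0,5,6,4,7]] :: nat list list"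
  shows "\<forall>i<5. \<forall>j<5.
           (\<forall>\<pi>\<in>(plane_classes :: ('a^4) set set set list) ! i.
               card {P \<in> (point_classes :: ('a^4) set set list) ! j. P \<in> \<pi>} = Tab ! i ! j)
         \<and> (\<forall>P\<in>(point_classes :: ('a^4) set set list) ! j.
               card {\<pi> \<in> (plane_classes :: ('a^4) set set set list) ! i. P \<in> \<pi>} = Bab ! i ! j)"
proof (intro allI impI)
  fix i j :: nat assume i: "i < 5" and j: "j < 5"
  have c4: "CARD('a) = 4" by (rule assms(1))
  have lN: "length NLs = 5" by (simp add: NLs_def)
  have lM: "length MLs = 5" by (simp add: MLs_def)
  have pc: "(plane_classes :: ('a^4) set set set list) ! i = Pl ` set (NLs ! i)"
    unfolding PC[OF c4] using i lN by simp
  have qc: "(point_classes :: ('a^4) set set list) ! j = Pt ` set (MLs ! j)"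
    unfolding QC[OF c4] using j lM by simp
  have n: "set (NLs!i) \<subseteq> set NPL" "distinct (NLs!i)" using NLs_ok i by auto
  have m: "set (MLs!j) \<subseteq> NP" "distinct (MLs!j)" using MLs_ok j by auto
  have t: "list_all (\<lambda>c. length (filter (\<lambda>x. dotc c x = G0) (MLs!j)) = Tab!i!j) (NLs!i)"
    using CONC i j unfolding Tab_def by blast
  have b: "list_all (\<lambda>x. length (filter (\<lambda>c. dotc c x = G0) (NLs!i)) = Bab!i!j) (MLs!j)"
    using CONC i j unfolding Bab_def by blast
  show "(\<forall>\<pi>\<in>(plane_classes :: ('a^4) set set set list) ! i.
               card {P \<in> (point_classes :: ('a^4) set set list) ! j. P \<in> \<pi>} = Tab ! i ! j)
         \<and> (\<forall>P\<in>(point_classes :: ('a^4) set set list) ! j.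
               card {\<pi> \<in> (plane_classes :: ('a^4) set set set list) ! i. P \<in> \<pi>} = Bab ! i ! j)"
    unfolding pc qc using LT[OF c4 n(1) m t] LB[OF c4 n m(1) b] by blast
qed


end
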